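(* Let $m\geq 1$ be an integer. For all integers $n\geq 1$ and all real $x\in(0,\pi)$, $$\sum_{\substack{k=0\\ k \text{ even}}}^n \binom{n-k+m}{m}\cos\bigl((k+1/2)x\bigr)>0 \qquad\text{and}\qquad \sum_{\substack{k=0\\ k \text{ even}}}^n \binom{n-k+m}{m}\sin\bigl((k+1/2)x\bigr)>0.$$ In both cases the lower bound $0$ is sharp. *)

theory Defs
  imports Complex_Main
begin

definition cos_even_sum :: "nat \<Rightarrow> nat \<Rightarrow> real \<Rightarrow> real" where
  "cos_even_sum m n x = (\<Sum>k\<in>{k. k \<le> n \<and> even k}. real ((n - k + m) choose m) * cos ((real k + 1/2) * x))"

definition sin_even_sum :: "nat \<Rightarrow> nat \<Rightarrow> real \<Rightarrow> real" where
  "sin_even_sum m n x = (\<Sum>k\<in>{k. k \<le> n \<and> even k}. real ((n - k + m) choose m) * sin ((real k + 1/2) * x))"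

end

theory Submission
  imports Defs
begin

lemma id1: fixes A y :: real shows "cos (A - y) * sin A + sin (2*y) * cos (2*A + y) = cos (A+y) * sin (A+2*y)"
proof -
  have p: "sin A ^2 + cos A ^2 = 1" "sin y ^2 + cos y^2 = 1" by simp_all
  show ?thesis unfolding sin_add cos_add sin_diff cos_diff sin_double cos_double using p by algebra
qed
lemma id2: fixes A y :: real shows "cos A * sin (A+y) = 1/2 * cos y * sin (2*A) + sin y * (cos A)^2"
  unfolding sin_add cos_add sin_double by algebra
lemma id3: fixes a y :: real shows "sin (2*y) * sin (2*a) = sin (a+y)^2 - sin (a-y)^2"
  unfolding sin_add cos_add sin_diff cos_diff sin_double by algebra

definition ES :: "nat \<Rightarrow> nat \<Rightarrow> (nat \<Rightarrow> real) \<Rightarrow> real" where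
  "ES m n g = (\<Sum>k\<le>n. if even k then real ((n-k+m) choose m) * g k else 0)"

lemma filter_sum: "(\<Sum>k\<in>{k. k \<le> (n::nat) \<and> even k}. f k) = (\<Sum>k\<le>n. if even k then f k else (0::real))"
proof -
  have "(\<Sum>k\<in>{k. k \<le> n \<and> even k}. f k) = (\<Sum>k\<in>{k\<in>{..n}. even k}. f k)"
    by (rule sum.cong) auto
  also have "\<dots> = (\<Sum>k\<le>n. if even k then f k else (0::real))"
    by (rule sum.inter_filter) simp
  finally show ?thesis .
qed

lemma cos_ES: "cos_even_sum m n x = ES m n (\<lambda>k. cos ((real k + 1/2) * x))"
  unfolding cos_even_sum_def ES_def filter_sum ..

lemma sin_ES: "sin_even_sum m n x = ES m n (\<lambda>k. sin ((real k + 1/2) * x))"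
  unfolding sin_even_sum_def ES_def filter_sum ..

lemma ES_0: "ES m 0 g = g 0" by (simp add: ES_def)

lemma ES_rec: "ES (Suc m) (Suc n) g = ES m (Suc n) g + ES (Suc m) n g"
proof -
  have t: "(if even k then real ((Suc n-k+Suc m) choose Suc m) * g k else 0)
     = (if even k then real ((Suc n-k+m) choose m) * g k else 0)
       + (if even k then real ((n-k+Suc m) choose Suc m) * g k else 0)" if "k \<le> n" for k
  proof -
    obtain a where a: "n = k + a" using \<open>k \<le> n\<close> le_Suc_ex by blast
    have "(Suc n-k+Suc m) choose Suc m = (Suc a + m choose m) + (a + Suc m choose Suc m)"
      using a by (simp add: Suc_diff_le)
    moreover have "Suc n - k + m = Suc a + m" "n - k + Suc m = a + Suc m" using a by auto
    ultimately show ?thesis by (simp add: algebra_simps)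
  qed
  have h1: "ES (Suc m) (Suc n) g = (\<Sum>k\<le>n. if even k then real ((Suc n-k+Suc m) choose Suc m) * g k else 0)
     + (if even (Suc n) then g (Suc n) else 0)"
    unfolding ES_def by simp
  have h2: "(\<Sum>k\<le>n. if even k then real ((Suc n-k+Suc m) choose Suc m) * g k else 0)
     = (\<Sum>k\<le>n. if even k then real ((Suc n-k+m) choose m) * g k else 0) + ES (Suc m) n g"
    unfolding ES_def sum.distrib[symmetric] by (rule sum.cong) (auto simp: t)
  have h3: "(\<Sum>k\<le>n. if even k then real ((Suc n-k+m) choose m) * g k else 0)
      + (if even (Suc n) then g (Suc n) else 0) = ES m (Suc n) g"
    unfolding ES_def by simp
  show ?thesis using h1 h2 h3 by linarith
qed

lemma ES_sum: "ES (Suc m) n g = (\<Sum>l\<le>n. ES m l g)"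
  by (induction n) (simp_all add: ES_0 ES_rec)

lemma ES0: "ES 0 l g = (\<Sum>k\<le>l. if even k then g k else 0)"
  unfolding ES_def by (intro sum.cong) auto

lemma ES0_Suc: "ES 0 (Suc l) g = ES 0 l g + (if even (Suc l) then g (Suc l) else 0)"
  unfolding ES0 by simp

definition tt :: "real \<Rightarrow> nat \<Rightarrow> real" where
  "tt y J = cos ((2*real J+1)*y) * sin ((2*real J+2)*y)"

lemma ES0_closed:
  "sin (2*y) * ES 0 l (\<lambda>k. cos ((real k + 1/2) * (2*y))) = tt y (l div 2)"
proof (induction l)
  case 0
  show ?case by (simp add: ES_0 tt_def mult.commute)
next
  case (Suc l)
  show ?case
  proof (cases "even (Suc l)")
    case False
    then have "Suc l div 2 = l div 2" by presburger
    thus ?thesis using Suc False by (simp add: ES0_Suc)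
  next
    case True
    define J where "J = l div 2"
    have l: "l = 2*J+1" using True J_def by presburger
    have s: "Suc l div 2 = J+1" using l by simp
    define A where "A = (2*real J+2)*y"
    have "sin (2*y) * ES 0 (Suc l) (\<lambda>k. cos ((real k + 1/2) * (2*y)))
       = tt y J + sin (2*y) * cos ((real (Suc l) + 1/2) * (2*y))"
    proof -
      have "sin (2*y) * ES 0 (Suc l) (\<lambda>k. cos ((real k + 1/2) * (2*y)))
         = sin (2*y) * ES 0 l (\<lambda>k. cos ((real k + 1/2) * (2*y))) + sin (2*y) * cos ((real (Suc l) + 1/2) * (2*y))"
        by (simp only: ES0_Suc if_P[OF True] distrib_left)
      then show ?thesis using Suc.IH unfolding J_def by simp
    qed
    also have "\<dots> = cos (A - y) * sin A + sin (2*y) * cos (2*A + y)"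
    proof -
      have a1: "(2*real J+1)*y = A - y" "(2*real J+2)*y = A" unfolding A_def by (simp_all add: algebra_simps)
      have a2: "(real (Suc l) + 1/2) * (2*y) = 2*A + y" unfolding A_def l by (simp add: algebra_simps)
      show ?thesis unfolding tt_def a1 a2 ..
    qed
    also have "\<dots> = cos (A+y) * sin (A+2*y)" by (rule id1)
    also have "\<dots> = tt y (Suc l div 2)"
    proof -
      have a1: "(2*real (J+1)+1)*y = A + y" "(2*real (J+1)+2)*y = A + 2*y" unfolding A_def by (simp_all add: algebra_simps)
      show ?thesis unfolding s tt_def a1 ..
    qed
    finally show ?thesis .
  qed
qed

lemma div2_sum: "(\<Sum>l\<le>(n::nat). f (l div 2)) = (\<Sum>p<n div 2 + 1. f p) + (\<Sum>p<(n+1) div 2. (f p::real))"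
proof (induction n)
  case 0 then show ?case by simp
next
  case (Suc n)
  have L: "(\<Sum>l\<le>Suc n. f (l div 2)) = (\<Sum>l\<le>n. f (l div 2)) + f (Suc n div 2)" by simp
  show ?case
  proof (cases "even n")
    case True
    then have e: "Suc n div 2 = n div 2" "(Suc n + 1) div 2 = Suc ((n+1) div 2)" "(n+1) div 2 = n div 2"
      by presburger+
    have "(\<Sum>p<(Suc n + 1) div 2. f p) = (\<Sum>p<(n+1) div 2. f p) + f (n div 2)"
      unfolding e(2) sum.lessThan_Suc e(3) ..
    then show ?thesis unfolding L Suc.IH e(1) by simp
  next
    case False
    then have e: "Suc n div 2 = Suc (n div 2)" "(Suc n + 1) div 2 = (n+1) div 2" "(n+1) div 2 = Suc (n div 2)"
      by presburger+
    have "(\<Sum>p<Suc n div 2 + 1. f p) = (\<Sum>p<n div 2 + 1. f p) + f (Suc n div 2)"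
      unfolding e(1) by simp
    then show ?thesis unfolding L Suc.IH e(2) by simp
  qed
qed

lemma fejer: "sin (2*y) * (\<Sum>p<M. sin ((4*real p+2)*y)) = sin (2*real M*y)^2"
proof (induction M)
  case 0 then show ?case by simp
next
  case (Suc M)
  define a where "a = (2*real M+1)*y"
  have e1: "(4*real M+2)*y = 2*a" "a+y = 2*real (Suc M)*y" "a - y = 2*real M*y"
    unfolding a_def by (simp_all add: algebra_simps)
  have "sin (2*y) * sin ((4*real M+2)*y) = sin (2*y) * sin (2*a)" unfolding e1 ..
  also have "\<dots> = sin (a+y)^2 - sin (a-y)^2" by (rule id3)
  also have "\<dots> = sin (2*real (Suc M)*y)^2 - sin (2*real M*y)^2"
    unfolding e1 ..
  finally show ?case using Suc by (simp add: distrib_left)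
qed

lemma fejer_nonneg: assumes "0 < y" "y < pi/2" shows "0 \<le> (\<Sum>p<M. sin ((4*real p+2)*y))"
proof -
  have "0 < sin (2*y)" using assms by (intro sin_gt_zero) auto
  moreover have "0 \<le> sin (2*y) * (\<Sum>p<M. sin ((4*real p+2)*y))" unfolding fejer by simp
  ultimately show ?thesis by (simp add: zero_le_mult_iff)
qed

lemma base_pos: assumes "0 < y" "y < pi/2"
  shows "0 < ES 1 n (\<lambda>k. cos ((real k + 1/2) * (2*y)))"
proof -
  let ?g = "\<lambda>k. cos ((real k + 1/2) * (2*y))"
  have sy: "0 < sin y" using assms by (intro sin_gt_zero) auto
  have cy: "0 < cos y" using assms by (intro cos_gt_zero) auto
  have s2: "0 < sin (2*y)" using assms by (intro sin_gt_zero) auto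
  have "sin (2*y) * ES 1 n ?g = (\<Sum>l\<le>n. tt y (l div 2))"
    using ES_sum[of 0 n ?g] by (simp add: sum_distrib_left ES0_closed)
  also have "\<dots> = (\<Sum>l\<le>n. 1/2 * cos y * sin ((4*real (l div 2)+2)*y))
        + (\<Sum>l\<le>n. sin y * cos ((2*real (l div 2)+1)*y)^2)"
    unfolding sum.distrib[symmetric]
  proof (rule sum.cong)
    fix l
    have e1: "(2*real (l div 2)+2)*y = (2*real (l div 2)+1)*y + y"
       "2*((2*real (l div 2)+1)*y) = (4*real (l div 2)+2)*y" by (simp_all add: algebra_simps)
    have "tt y (l div 2) = cos ((2*real (l div 2)+1)*y) * sin ((2*real (l div 2)+1)*y + y)"
      unfolding tt_def e1 ..
    also have "\<dots> = 1/2 * cos y * sin (2*((2*real (l div 2)+1)*y)) + sin y * cos ((2*real (l div 2)+1)*y)^2"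
      by (rule id2)
    finally show "tt y (l div 2) = 1/2 * cos y * sin ((4*real (l div 2)+2)*y) + sin y * cos ((2*real (l div 2)+1)*y)^2"
      unfolding e1 .
  qed simp
  finally have eq: "sin (2*y) * ES 1 n ?g = \<dots>" .
  have A: "0 \<le> (\<Sum>l\<le>n. 1/2 * cos y * sin ((4*real (l div 2)+2)*y))"
  proof -
    have "(\<Sum>l\<le>n. 1/2 * cos y * sin ((4*real (l div 2)+2)*y))
       = 1/2 * cos y * (\<Sum>l\<le>n. sin ((4*real (l div 2)+2)*y))" by (simp add: sum_distrib_left)
    also have "(\<Sum>l\<le>n. sin ((4*real (l div 2)+2)*y))
       = (\<Sum>p<n div 2 + 1. sin ((4*real p+2)*y)) + (\<Sum>p<(n+1) div 2. sin ((4*real p+2)*y))"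
      by (rule div2_sum)
    finally have eqA: "(\<Sum>l\<le>n. 1/2 * cos y * sin ((4*real (l div 2)+2)*y)) = 1/2 * cos y *
       ((\<Sum>p<n div 2 + 1. sin ((4*real p+2)*y)) + (\<Sum>p<(n+1) div 2. sin ((4*real p+2)*y)))" .
    have "0 \<le> (\<Sum>p<n div 2 + 1. sin ((4*real p+2)*y)) + (\<Sum>p<(n+1) div 2. sin ((4*real p+2)*y))"
      using fejer_nonneg[OF assms] by (intro add_nonneg_nonneg)
    then show ?thesis unfolding eqA using cy by simp
  qed
  have B: "0 < (\<Sum>l\<le>n. sin y * cos ((2*real (l div 2)+1)*y)^2)"
    by (rule sum_pos2[where i=0]) (use sy cy in auto)
  have "0 < sin (2*y) * ES 1 n ?g" using eq A B by simp
  thus ?thesis using s2 by (simp add: zero_less_mult_iff)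
qed

lemma cos_pos_aux: assumes "0 < x" "x < pi"
  shows "\<forall>n. 0 < ES (Suc j) n (\<lambda>k. cos ((real k + 1/2) * x))"
proof (induction j)
  case 0
  have g: "(\<lambda>k. cos ((real k + 1/2) * x)) = (\<lambda>k. cos ((real k + 1/2) * (2*(x/2))))" by simp
  show ?case unfolding g One_nat_def[symmetric] by (intro allI base_pos) (use assms in auto)
next
  case (Suc j)
  show ?case
  proof
    fix n
    have "ES (Suc (Suc j)) n (\<lambda>k. cos ((real k + 1/2) * x)) = (\<Sum>l\<le>n. ES (Suc j) l (\<lambda>k. cos ((real k + 1/2) * x)))"
      by (rule ES_sum)
    also have "0 < \<dots>" using Suc.IH by (intro sum_pos2[where i=0]) (auto intro: less_imp_le)
    finally show "0 < ES (Suc (Suc j)) n (\<lambda>k. cos ((real k + 1/2) * x))" .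
  qed
qed

lemma cos_pos: assumes "0 < x" "x < pi" "m \<ge> 1" shows "0 < cos_even_sum m n x"
proof -
  obtain j where "m = Suc j" using assms(3) by (cases m) auto
  then show ?thesis using cos_pos_aux[OF assms(1,2), of j] by (simp add: cos_ES)
qed

lemma sym: "sin_even_sum m n x = cos_even_sum m n (pi - x)"
  unfolding sin_even_sum_def cos_even_sum_def
proof (rule sum.cong)
  fix k assume "k \<in> {k. k \<le> n \<and> even k}"
  then obtain j where k: "k = 2*j" by auto
  have ar: "(real k + 1/2) * (pi - x) = 2*real j*pi + (pi/2 - (real k + 1/2)*x)"
    unfolding k by (simp add: field_simps)
  have "cos ((real k + 1/2) * (pi - x)) = cos (2*real j*pi + (pi/2 - (real k + 1/2)*x))"
    unfolding ar ..
  also have "\<dots> = sin ((real k + 1/2) * x)"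
    by (simp add: cos_add cos_diff)
  finally show "real ((n - k + m) choose m) * sin ((real k + 1/2) * x) =
        real ((n - k + m) choose m) * cos ((real k + 1/2) * (pi - x))" by simp
qed simp

lemma n1_sin: "sin_even_sum m 1 x = real (m+1) * sin (x/2)"
proof -
  have "{k. k \<le> (1::nat) \<and> even k} = {0}" by auto
  thus ?thesis unfolding sin_even_sum_def by simp
qed

lemma sharp_sin: assumes "(e::real) > 0" shows "\<exists>x. 0 < x \<and> x < pi \<and> sin_even_sum m 1 x < e"
proof -
  define d where "d = min (pi/2) (e / real (m+1))"
  have d0: "0 < d" using assms pi_gt_zero unfolding d_def by auto
  have dpi: "d < pi" unfolding d_def using pi_gt_zero by linarith
  have "sin (d/2) \<le> d/2" using d0 by (intro sin_x_le_x) simp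
  then have "real (m+1) * sin (d/2) \<le> real (m+1) * (d/2)" by (intro mult_left_mono) auto
  also have "\<dots> < real (m+1) * d" using d0 by simp
  also have "\<dots> \<le> e"
  proof -
    have "d \<le> e / real (m+1)" unfolding d_def by simp
    then show ?thesis by (simp add: le_divide_eq mult.commute)
  qed
  finally have "sin_even_sum m 1 d < e" unfolding n1_sin by simp
  then show ?thesis using d0 dpi by blast
qed

theorem theorem3:
  fixes m :: nat
  assumes "m \<ge> 1"
  shows "(\<forall>n::nat. \<forall>x::real. n \<ge> 1 \<longrightarrow> 0 < x \<longrightarrow> x < pi \<longrightarrow>
            cos_even_sum m n x > 0 \<and> sin_even_sum m n x > 0)
       \<and> (\<forall>\<epsilon>>0. \<exists>n::nat. \<exists>x::real. n \<ge> 1 \<and> 0 < x \<and> x < pi \<and> cos_even_sum m n x < \<epsilon>)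
       \<and> (\<forall>\<epsilon>>0. \<exists>n::nat. \<exists>x::real. n \<ge> 1 \<and> 0 < x \<and> x < pi \<and> sin_even_sum m n x < \<epsilon>)"
proof (intro conjI allI impI)
  fix n :: nat and x :: real assume "0 < x" "x < pi"
  then show "0 < cos_even_sum m n x" using cos_pos assms by blast
  show "0 < sin_even_sum m n x" unfolding sym using cos_pos assms \<open>0 < x\<close> \<open>x < pi\<close> by simp
next
  fix e :: real assume "e > 0"
  then obtain x where x: "0 < x" "x < pi" "sin_even_sum m 1 x < e" using sharp_sin by blast
  show "\<exists>n x. n \<ge> 1 \<and> 0 < x \<and> x < pi \<and> sin_even_sum m n x < e" using x by blast
  show "\<exists>n x. n \<ge> 1 \<and> 0 < x \<and> x < pi \<and> cos_even_sum m n x < e"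
    using x by (intro exI[of _ 1] exI[of _ "pi - x"]) (simp add: sym)
qed

end
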